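(* Let $N\ge1$, $p\ge2$, $w,g\in L^1_{loc}(\mathbb{R}^N)$ positive a.e. with $g^{-1}\in L^\infty(\mathbb{R}^N)$. Let $0<\delta<\gamma$ with $(\delta,p)$ in the class $P_a$. Assume there exist constants $\lambda>0$ and $C>0$ such that $\lambda<pS_p^a$ and $\int_{B_{2R}(0)}w^{S_p^a}dx\le CR^{\lambda}$ for all $R\ge1$. Then there is no $u\in C^1(\mathbb{R}^N)$ with $0<u\le1$ in $\mathbb{R}^N$ which is a stable weak solution of $\operatorname{div}(w|\nabla u|^{p-2}\nabla u)=g(x)(u^{-\delta}+u^{-\gamma})$ in $\mathbb{R}^N$.
   Context: Weak solution and stability are with respect to $f(t)=-t^{-\delta}-t^{-\gamma}$ and the equation $-\operatorname{div}(w|\nabla u|^{p-2}\nabla u)=gf(u)$: $u\in C^1$ is a weak solution if $\int w|\nabla u|^{p-2}\nabla u\cdot\nabla\varphi=\int gf(u)\varphi$ for all $\varphi\in C^1_c(\mathbb{R}^N)$; it is stable if for all $\varphi\in C^1_c(\mathbb{R}^N)$, $\int w|\nabla u|^{p-2}|\nabla\varphi|^2+(p-2)\int w|\nabla u|^{p-4}(\nabla u\cdot\nabla\varphi)^2-\int gf'(u)\varphi^2\ge0$ (middle integrand $=0$ where $\nabla u=0$). Class $P_a$: $(\delta,p)\in P_a$ if either $2\le p<3$ and $\delta\ge1$, or $p=3$ and $\delta>1$, or $p>3$ and $\delta>\frac{(p-1)^2}{4}$. $s_p=\delta+\sqrt{\delta^2+\delta}$ if $p=2$, $s_p=\frac{2\delta}{p-1}-\frac{p-1}{2}$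 if $p>2$; $S_p^a=1+\frac{2s_p}{p-1+\delta}$. $B_r(0)$ is the open ball of radius $r$ centered at the origin. *)

theory Defs
  imports "HOL-Analysis.Analysis"
begin

definition grad :: "('a::euclidean_space \<Rightarrow> real) \<Rightarrow> 'a \<Rightarrow> 'a" where
  "grad u x = (SOME v. (u has_derivative (\<lambda>h. v \<bullet> h)) (at x))"

definition C1 :: "('a::euclidean_space \<Rightarrow> real) \<Rightarrow> bool" where
  "C1 u \<longleftrightarrow> (\<exists>G. continuous_on UNIV G \<and> (\<forall>x. (u has_derivative (\<lambda>h. G x \<bullet> h)) (at x)))"

definition C1c :: "('a::euclidean_space \<Rightarrow> real) \<Rightarrow> bool" where
  "C1c \<phi> \<longleftrightarrow> C1 \<phi> \<and> (\<exists>K. compact K \<and> (\<forall>x. x \<notin> K \<longrightarrow> \<phi> x = 0))"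

definition loc_integrable :: "('a::euclidean_space \<Rightarrow> real) \<Rightarrow> bool" where
  "loc_integrable w \<longleftrightarrow> (\<forall>K. compact K \<longrightarrow> set_integrable lebesgue K w)"

definition fnl :: "real \<Rightarrow> real \<Rightarrow> real \<Rightarrow> real" where
  "fnl \<delta> \<gamma> t = - (t powr (-\<delta>)) - t powr (-\<gamma>)"

text \<open>r^e for r \<ge> 0 with the convention r^0 = 1 (Isabelle has 0 powr 0 = 0).\<close>
definition npow :: "real \<Rightarrow> real \<Rightarrow> real" where
  "npow r e = (if e = 0 then 1 else r powr e)"

definition weak_sol :: "('a::euclidean_space \<Rightarrow> real) \<Rightarrow> ('a \<Rightarrow> real) \<Rightarrow> real \<Rightarrow> real \<Rightarrow> real
    \<Rightarrow> ('a \<Rightarrow> real) \<Rightarrow> bool" where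
  "weak_sol w g \<delta> \<gamma> p u \<longleftrightarrow> C1 u \<and>
     (\<forall>\<phi>. C1c \<phi> \<longrightarrow>
        (LINT x|lebesgue. w x * npow (norm (grad u x)) (p - 2) * (grad u x \<bullet> grad \<phi> x))
        = (LINT x|lebesgue. g x * fnl \<delta> \<gamma> (u x) * \<phi> x))"

definition stable_sol :: "('a::euclidean_space \<Rightarrow> real) \<Rightarrow> ('a \<Rightarrow> real) \<Rightarrow> real \<Rightarrow> real \<Rightarrow> real
    \<Rightarrow> ('a \<Rightarrow> real) \<Rightarrow> bool" where
  "stable_sol w g \<delta> \<gamma> p u \<longleftrightarrow>
     (\<forall>\<phi>. C1c \<phi> \<longrightarrow>
        (LINT x|lebesgue. w x * npow (norm (grad u x)) (p - 2) * (norm (grad \<phi> x))\<^sup>2)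
        + (p - 2) * (LINT x|lebesgue. (if grad u x = 0 then 0 else
              w x * norm (grad u x) powr (p - 4) * (grad u x \<bullet> grad \<phi> x)\<^sup>2))
        - (LINT x|lebesgue. g x * deriv (fnl \<delta> \<gamma>) (u x) * (\<phi> x)\<^sup>2) \<ge> 0)"

definition class_Pa :: "real \<Rightarrow> real \<Rightarrow> bool" where
  "class_Pa \<delta> p \<longleftrightarrow> (2 \<le> p \<and> p < 3 \<and> \<delta> \<ge> 1) \<or> (p = 3 \<and> \<delta> > 1)
                     \<or> (p > 3 \<and> \<delta> > (p - 1)\<^sup>2 / 4)"

definition s_p :: "real \<Rightarrow> real \<Rightarrow> real" where
  "s_p \<delta> p = (if p = 2 then \<delta> + sqrt (\<delta>\<^sup>2 + \<delta>) else 2 * \<delta> / (p - 1) - (p - 1) / 2)"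

definition S_pa :: "real \<Rightarrow> real \<Rightarrow> real" where
  "S_pa \<delta> p = 1 + 2 * s_p \<delta> p / (p - 1 + \<delta>)"

end

theory Submission
  imports Defs
begin


lemma grad_eq:
  fixes f :: "'a::euclidean_space \<Rightarrow> real"
  assumes "(f has_derivative (\<lambda>h. G \<bullet> h)) (at x)"
  shows "grad f x = G"
proof -
  have "\<exists>v. (f has_derivative (\<lambda>h. v \<bullet> h)) (at x)" using assms by blast
  then have d: "(f has_derivative (\<lambda>h. grad f x \<bullet> h)) (at x)"
    unfolding grad_def by (rule someI_ex)
  have "(\<lambda>h. grad f x \<bullet> h) = (\<lambda>h. G \<bullet> h)"
    by (rule has_derivative_unique[OF d assms])
  then have "grad f x \<bullet> (grad f x - G) = G \<bullet> (grad f x - G)" by metis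
  then have "(grad f x - G) \<bullet> (grad f x - G) = 0" by (simp add: inner_diff_left)
  then show ?thesis by simp
qed

lemma loc_int_meas:
  fixes w :: "'a::euclidean_space \<Rightarrow> real"
  assumes "loc_integrable w"
  shows "w \<in> borel_measurable lebesgue"
proof (rule borel_measurable_LIMSEQ_real)
  show "(\<lambda>n. indicator (cball 0 (real n)) x * w x) \<longlonglongrightarrow> w x" for x
  proof (rule tendsto_eventually)
    have "\<forall>n\<ge>nat \<lceil>norm x\<rceil>. indicator (cball 0 (real n)) x * w x = w x"
    proof (intro allI impI)
      fix n assume "n \<ge> nat \<lceil>norm x\<rceil>"
      then have "norm x \<le> real n" by linarith
      then show "indicator (cball 0 (real n)) x * w x = w x" by (simp add: indicator_def)
    qed
    then show "\<forall>\<^sub>F n in sequentially. indicator (cball 0 (real n)) x * w x = w x"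
      using eventually_sequentially by blast
  qed
  show "(\<lambda>x. indicator (cball 0 (real n)) x * w x) \<in> borel_measurable lebesgue" for n
  proof -
    have "set_integrable lebesgue (cball 0 (real n)) w" using assms unfolding loc_integrable_def by simp
    then show ?thesis unfolding set_integrable_def by (simp add: borel_measurable_integrable)
  qed
qed

lemma loc_int_mult:
  fixes w c :: "'a::euclidean_space \<Rightarrow> real"
  assumes "loc_integrable w" "continuous_on UNIV c" "compact K" "\<And>x. x \<notin> K \<Longrightarrow> c x = 0"
  shows "integrable lebesgue (\<lambda>x. w x * c x)"
proof -
  have cK: "compact (c ` K)" using assms(2,3) by (meson compact_continuous_image continuous_on_subset top_greatest)
  then obtain B where B: "\<And>y. y \<in> c ` K \<Longrightarrow> norm y \<le> B" using compact_imp_bounded bounded_iff by metis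
  have "set_integrable lebesgue K w" using assms unfolding loc_integrable_def by simp
  then have i: "integrable lebesgue (\<lambda>x. B * (indicator K x * w x))" unfolding set_integrable_def by simp
  have mw: "w \<in> borel_measurable lebesgue" by (rule loc_int_meas[OF assms(1)])
  have mc: "c \<in> borel_measurable lebesgue"
  proof -
    have "c \<in> borel_measurable lborel" using borel_measurable_continuous_onI[OF assms(2)] by simp
    then show ?thesis by (rule measurable_completion)
  qed
  show ?thesis
  proof (rule Bochner_Integration.integrable_bound[OF i])
    show "(\<lambda>x. w x * c x) \<in> borel_measurable lebesgue" using mw mc by simp
    show "AE x in lebesgue. norm (w x * c x) \<le> norm (B * (indicator K x * w x))"
    proof (rule AE_I2)
      fix x show "norm (w x * c x) \<le> norm (B * (indicator K x * w x))"
      proof (cases "x \<in> K")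
        case True
        then have "\<bar>c x\<bar> \<le> B" using B by auto
        then have "\<bar>w x\<bar> * \<bar>c x\<bar> \<le> \<bar>w x\<bar> * B" by (simp add: mult_left_mono)
        moreover have "B \<ge> 0" using \<open>\<bar>c x\<bar> \<le> B\<close> by linarith
        ultimately show ?thesis using True by (simp add: abs_mult mult.commute)
      next
        case False then show ?thesis using assms(4) by simp
      qed
    qed
  qed
qed

lemma maxpow_deriv:
  assumes m: "m \<ge> 2"
  shows "((\<lambda>y::real. (max 0 y) ^ m) has_real_derivative (real m * (max 0 y) ^ (m - 1))) (at y)"
proof (cases "y > 0")
  case True
  have "((\<lambda>y::real. y ^ m) has_real_derivative (real m * y ^ (m - 1))) (at y)"
    using DERIV_pow[of m y] by simp
  then have "((\<lambda>y::real. (max 0 y) ^ m) has_real_derivative (real m * y ^ (m - 1))) (at y)"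
    by (rule has_field_derivative_transform_within_open[where S="{0<..}"]) (use True in auto)
  then show ?thesis using True by simp
next
  case False
  show ?thesis
  proof (cases "y < 0")
    case True
    have "((\<lambda>y::real. 0) has_real_derivative 0) (at y)" by simp
    then have "((\<lambda>y::real. (max 0 y) ^ m) has_real_derivative 0) (at y)"
      by (rule has_field_derivative_transform_within_open[where S="{..<0}"]) (use True m in auto)
    then show ?thesis using True m by (simp add: zero_power)
  next
    case False
    then have y0: "y = 0" using \<open>\<not> y > 0\<close> by simp
    have "((\<lambda>z::real. ((max 0 z) ^ m - (max 0 0) ^ m) / (z - 0)) \<longlongrightarrow> 0) (at 0)"
    proof (rule Lim_null_comparison)
      show "\<forall>\<^sub>F z in at 0. norm (((max 0 z) ^ m - (max 0 0) ^ m) / (z - 0)) \<le> \<bar>z\<bar> ^ (m - 1)"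
      proof (rule always_eventually, rule allI)
        fix z :: real
        have "\<bar>max 0 z\<bar> ^ m \<le> \<bar>z\<bar> ^ m" by (rule power_mono) auto
        moreover have "\<bar>z\<bar> ^ m = \<bar>z\<bar> ^ (m - 1) * \<bar>z\<bar>"
          using m by (metis Suc_diff_1 less_le_trans pos2 power_Suc2)
        ultimately have "\<bar>max 0 z\<bar> ^ m \<le> \<bar>z\<bar> ^ (m - 1) * \<bar>z\<bar>" by simp
        then show "norm (((max 0 z) ^ m - (max 0 0) ^ m) / (z - 0)) \<le> \<bar>z\<bar> ^ (m - 1)"
          using m by (cases "z = 0") (auto simp: abs_mult power_abs divide_le_eq zero_power)
      qed
      have "((\<lambda>z::real. \<bar>z\<bar> ^ (m - 1)) \<longlongrightarrow> \<bar>0\<bar> ^ (m - 1)) (at 0)"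
        by (intro tendsto_intros)
      moreover have "\<bar>0::real\<bar> ^ (m - 1) = 0" using m by simp
      ultimately show "((\<lambda>z::real. \<bar>z\<bar> ^ (m - 1)) \<longlongrightarrow> 0) (at 0)" by (simp only:)
    qed
    then show ?thesis using y0 m by (simp add: has_field_derivative_iff zero_power)
  qed
qed

lemma npow_nonneg: "a \<ge> 0 \<Longrightarrow> npow a e \<ge> 0"
  by (simp add: npow_def)

lemma npow_mult: assumes "a \<ge> 0" "p \<ge> 2" shows "a * npow a (p - 2) = a powr (p - 1)"
proof (cases "p = 2")
  case True then show ?thesis using assms by (simp add: npow_def)
next
  case False
  show ?thesis
  proof (cases "a = 0")
    case True then show ?thesis using False assms by (simp add: npow_def)
  next
    case False
    then have "a > 0" using assms by simp
    then have "a * a powr (p - 2) = a powr (1 + (p - 2))" using powr_mult_base[of a "p - 2"] by simp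
    also have "\<dots> = a powr (p - 1)" by simp
    finally show ?thesis using \<open>p \<noteq> 2\<close> by (simp add: npow_def)
  qed
qed

lemma key_ineq:
  fixes a b z q R p :: real and m :: nat
  assumes a: "a \<ge> 0" and b: "b \<ge> 0" and z0: "0 \<le> z" and z1: "z \<le> 1" and R: "R > 0" and p: "p \<ge> 2"
    and mp: "real m \<ge> p" and bb: "b \<le> (real m / R) * z ^ (m - 1)"
    and q: "q \<ge> z ^ m * a\<^sup>2 - 2 * a * b"
  shows "npow a (p - 2) * q \<ge> (if z > 0 then - ((2 * real m) powr p / R powr p) else 0)"
proof -
  have m2: "m \<ge> 2" using mp p by linarith
  define P where "P = npow a (p - 2)"
  have P0: "P \<ge> 0" unfolding P_def using a by (rule npow_nonneg)
  have aP: "a * P = a powr (p - 1)" unfolding P_def using a p by (rule npow_mult)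
  have rhs_le0: "(if z > 0 then - ((2 * real m) powr p / R powr p) else 0) \<le> 0" by simp
  show ?thesis
  proof (cases "z ^ m * a \<ge> 2 * b")
    case True
    have "z ^ m * a\<^sup>2 - 2 * a * b = a * (z ^ m * a - 2 * b)" by (simp add: power2_eq_square algebra_simps)
    also have "\<dots> \<ge> 0" using True a by simp
    finally have "q \<ge> 0" using q by linarith
    then have "P * q \<ge> 0" using P0 by simp
    then show ?thesis using rhs_le0 unfolding P_def by linarith
  next
    case False
    have "z ^ m * a \<ge> 0" using a z0 by simp
    then have bpos: "b > 0" using False by linarith
    have zpos: "z > 0"
    proof (rule ccontr)
      assume "\<not> z > 0" then have "z = 0" using z0 by simp
      moreover have "(0::real) ^ (m - 1) = 0" using m2 by simp
      ultimately have "b \<le> 0" using bb m2 by (simp add: power_0_left)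
      then show False using bpos by simp
    qed
    have psi: "z ^ m > 0" using zpos by simp
    have zm: "z ^ m = z ^ (m - 1) * z" using m2 by (metis Suc_diff_1 less_le_trans pos2 power_Suc2)
    define A where "A = 2 * real m / R"
    have Apos: "A > 0" unfolding A_def using R m2 by simp
    have "a < 2 * b / z ^ m" using False psi by (simp add: pos_less_divide_eq mult.commute)
    also have "\<dots> \<le> 2 * ((real m / R) * z ^ (m - 1)) / z ^ m"
      by (intro divide_right_mono) (use bb psi in auto)
    also have "\<dots> = A / z"
    proof -
      have zp: "z ^ (m - 1) > 0" using zpos by simp
      have "2 * ((real m / R) * z ^ (m - 1)) / z ^ m = (2 * (real m / R)) * (z ^ (m - 1) / (z ^ (m - 1) * z))"
        unfolding zm by simp
      also have "z ^ (m - 1) / (z ^ (m - 1) * z) = 1 / z" using zp by simp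
      finally show ?thesis unfolding A_def by simp
    qed
    finally have a_lt: "a < A / z" .
    have "a powr (p - 1) \<le> (A / z) powr (p - 1)"
      using a_lt a p by (intro powr_mono2) auto
    also have "\<dots> = A powr (p - 1) / z powr (p - 1)" by (rule powr_divide)
    finally have apow: "a powr (p - 1) \<le> A powr (p - 1) / z powr (p - 1)" .
    have zr: "z ^ (m - 1) = z powr (real (m - 1))" using zpos by (simp add: powr_realpow)
    have "p - 1 \<le> real (m - 1)" using mp m2 by (simp add: of_nat_diff)
    then have "z powr (real (m - 1)) \<le> z powr (p - 1)" using zpos z1 by (intro powr_mono') auto
    then have zz: "z ^ (m - 1) / z powr (p - 1) \<le> 1" using zr zpos by simp
    have "2 * b * a powr (p - 1) \<le> 2 * ((real m / R) * z ^ (m - 1)) * (A powr (p - 1) / z powr (p - 1))"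
      using bb apow b by (intro mult_mono) auto
    also have "\<dots> = (A * A powr (p - 1)) * (z ^ (m - 1) / z powr (p - 1))"
      unfolding A_def by simp
    also have "\<dots> \<le> (A * A powr (p - 1)) * 1"
      using zz Apos by (intro mult_left_mono) auto
    also have "\<dots> = A powr p" using Apos by (simp add: powr_mult_base)
    also have "\<dots> = (2 * real m) powr p / R powr p" unfolding A_def by (rule powr_divide)
    finally have main: "2 * b * a powr (p - 1) \<le> (2 * real m) powr p / R powr p" .
    have "P * q \<ge> P * (z ^ m * a\<^sup>2 - 2 * a * b)" using q P0 by (simp add: mult_left_mono)
    moreover have "P * (z ^ m * a\<^sup>2 - 2 * a * b) = P * z ^ m * a\<^sup>2 - 2 * b * (a * P)"
      by (simp add: power2_eq_square algebra_simps)
    moreover have "P * z ^ m * a\<^sup>2 \<ge> 0" using P0 psi by simp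
    moreover have "2 * b * (a * P) = 2 * b * a powr (p - 1)" using aP by simp
    ultimately have "P * q \<ge> - (2 * b * a powr (p - 1))" by linarith
    then show ?thesis using main zpos unfolding P_def by simp
  qed
qed



definition zeta :: "real \<Rightarrow> 'a::euclidean_space \<Rightarrow> real" where
  "zeta R x = max 0 (1 - (x \<bullet> x) / (4 * R\<^sup>2))"

definition Gpsi :: "real \<Rightarrow> nat \<Rightarrow> 'a::euclidean_space \<Rightarrow> 'a" where
  "Gpsi R m x = (real m * zeta R x ^ (m - 1) * (- 1 / (2 * R\<^sup>2))) *\<^sub>R x"

lemma psi_deriv:
  fixes x :: "'a::euclidean_space"
  assumes m: "m \<ge> 2" and R: "R > 0"
  shows "((\<lambda>x. zeta R x ^ m) has_derivative (\<lambda>h. Gpsi R m x \<bullet> h)) (at x)"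
proof -
  have y: "((\<lambda>x. 1 - (x \<bullet> x) / (4 * R\<^sup>2)) has_derivative (\<lambda>h. - ((h \<bullet> x + x \<bullet> h) / (4 * R\<^sup>2)))) (at x)"
    using R by (auto intro!: derivative_eq_intros simp: fun_eq_iff power2_eq_square power4_eq_xxxx field_simps)
  have o: "((\<lambda>y::real. (max 0 y) ^ m) has_derivative (\<lambda>t. (real m * (max 0 (1 - (x \<bullet> x) / (4 * R\<^sup>2))) ^ (m - 1)) * t))
     (at (1 - (x \<bullet> x) / (4 * R\<^sup>2)))"
    using maxpow_deriv[OF m] unfolding has_field_derivative_def by blast
  have c: "((\<lambda>x. (max 0 (1 - (x \<bullet> x) / (4 * R\<^sup>2))) ^ m) has_derivative
     (\<lambda>h. (real m * (max 0 (1 - (x \<bullet> x) / (4 * R\<^sup>2))) ^ (m - 1)) * (- ((h \<bullet> x + x \<bullet> h) / (4 * R\<^sup>2))))) (at x)"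
    using has_derivative_compose[OF y o] .
  show ?thesis
    apply (rule has_derivative_eq_rhs)
     apply (rule c[folded zeta_def])
    using R by (auto simp: zeta_def Gpsi_def inner_commute fun_eq_iff power2_eq_square field_simps)
qed


lemma zeta_nonneg: "zeta R x \<ge> 0" by (simp add: zeta_def)

lemma zeta_le1: assumes "R > 0" shows "zeta R x \<le> 1"
proof -
  have "(x \<bullet> x) / (4 * R\<^sup>2) \<ge> 0" by simp
  then show ?thesis by (simp add: zeta_def)
qed

lemma zeta_pos_norm: assumes R: "R > 0" and z: "zeta R x > 0" shows "norm x < 2 * R"
proof -
  have "1 - (x \<bullet> x) / (4 * R\<^sup>2) > 0" using z by (simp add: zeta_def)
  then have h: "(x \<bullet> x) / (4 * R\<^sup>2) < 1" by linarith
  have R4: "4 * R\<^sup>2 > 0" using R by simp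
  have "x \<bullet> x < 1 * (4 * R\<^sup>2)" using h pos_divide_less_eq[OF R4] by blast
  then have "x \<bullet> x < 4 * R\<^sup>2" by linarith
  moreover have "(2 * R)\<^sup>2 = 4 * R\<^sup>2" by (simp add: power_mult_distrib)
  ultimately have n2: "(norm x)\<^sup>2 < (2 * R)\<^sup>2" by (simp only: dot_square_norm)
  show ?thesis using power2_less_imp_less[OF n2] R by simp
qed

lemma zeta_zero: assumes R: "R > 0" and "norm x \<ge> 2 * R" shows "zeta R x = 0"
  using zeta_pos_norm[OF R, of x] zeta_nonneg[of R x] assms(2) by linarith

lemma zeta_ball: assumes R: "R > 0" and x: "norm x < R" shows "zeta R x \<ge> 3 / 4"
proof -
  have "(norm x)\<^sup>2 < R\<^sup>2" using power_strict_mono[OF x norm_ge_zero, of 2] by simp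
  then have "x \<bullet> x < R\<^sup>2" by (simp only: dot_square_norm)
  then have "x \<bullet> x < 1 / 4 * (4 * R\<^sup>2)" by simp
  moreover have R4: "4 * R\<^sup>2 > 0" using R by simp
  ultimately have "(x \<bullet> x) / (4 * R\<^sup>2) < 1 / 4" using pos_divide_less_eq[OF R4] by blast
  then show ?thesis by (simp add: zeta_def)
qed

lemma Gpsi_bound:
  fixes x :: "'a::euclidean_space"
  assumes R: "R > 0" and m: "m \<ge> 2"
  shows "norm (Gpsi R m x) \<le> (real m / R) * zeta R x ^ (m - 1)"
proof (cases "zeta R x > 0")
  case True
  have nx: "norm x < 2 * R" by (rule zeta_pos_norm[OF R True])
  have "norm (Gpsi R m x) = real m * zeta R x ^ (m - 1) * (1 / (2 * R\<^sup>2)) * norm x"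
    unfolding Gpsi_def using R zeta_nonneg[of R x] by (simp add: abs_mult)
  also have "\<dots> \<le> real m * zeta R x ^ (m - 1) * (1 / (2 * R\<^sup>2)) * (2 * R)"
    using nx zeta_nonneg[of R x] R by (intro mult_left_mono) auto
  also have "\<dots> = (real m / R) * zeta R x ^ (m - 1)" using R by (simp add: field_simps power2_eq_square)
  finally show ?thesis .
next
  case False
  then have "zeta R x = 0" using zeta_nonneg[of R x] by simp
  then show ?thesis using m by (simp add: Gpsi_def power_0_left)
qed

lemma zeta_cont: "continuous_on UNIV (zeta R)"
  unfolding zeta_def divide_inverse by (intro continuous_intros)

lemma Gpsi_cont: "continuous_on UNIV (Gpsi R m)"
  unfolding Gpsi_def
  by (intro continuous_on_scaleR continuous_on_mult continuous_on_power continuous_on_const continuous_on_id zeta_cont)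

lemma psi_C1: assumes "m \<ge> 2" "R > 0" shows "C1 (\<lambda>x. zeta R x ^ m)"
  unfolding C1_def using Gpsi_cont psi_deriv[OF assms] by blast

lemma grad_psi: assumes "m \<ge> 2" "R > 0" shows "grad (\<lambda>x. zeta R x ^ m) x = Gpsi R m x"
  by (rule grad_eq[OF psi_deriv[OF assms]])

lemma phi_deriv:
  fixes u :: "'a::euclidean_space \<Rightarrow> real"
  assumes m: "m \<ge> 2" and R: "R > 0" and du: "(u has_derivative (\<lambda>h. Gu \<bullet> h)) (at x)"
  shows "((\<lambda>x. (u x + 1) * zeta R x ^ m) has_derivative
     (\<lambda>h. ((u x + 1) *\<^sub>R Gpsi R m x + zeta R x ^ m *\<^sub>R Gu) \<bullet> h)) (at x)"
proof -
  have d1: "((\<lambda>x. u x + 1) has_derivative (\<lambda>h. Gu \<bullet> h)) (at x)"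
    using du by (auto intro!: derivative_eq_intros)
  show ?thesis
    using has_derivative_mult[OF d1 psi_deriv[OF m R, of x]]
    by (simp add: inner_add_left algebra_simps)
qed


lemma npow_cont:
  fixes F :: "'a::euclidean_space \<Rightarrow> 'a"
  assumes "continuous_on UNIV F" "p \<ge> 2"
  shows "continuous_on UNIV (\<lambda>x. npow (norm (F x)) (p - 2))"
proof (cases "p = 2")
  case True then show ?thesis by (simp add: npow_def)
next
  case False
  then have e: "(\<lambda>x. npow (norm (F x)) (p - 2)) = (\<lambda>x. norm (F x) powr (p - 2))"
    by (simp add: npow_def fun_eq_iff)
  have "continuous_on UNIV (\<lambda>x. norm (F x))" using assms(1) by (rule continuous_on_norm)
  moreover have "continuous_on UNIV (\<lambda>x::'a. p - 2)" by (rule continuous_on_const)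
  moreover have "\<forall>x\<in>UNIV. norm (F x) \<ge> 0 \<and> (norm (F x) = 0 \<longrightarrow> p - 2 > 0)" using False assms(2) by auto
  ultimately show ?thesis unfolding e by (rule continuous_on_powr')
qed

lemma S_gt1:
  assumes P: "class_Pa \<delta> p" and d: "\<delta> > 0" and p: "p \<ge> 2"
  shows "S_pa \<delta> p > 1"
proof -
  have sp: "s_p \<delta> p > 0"
  proof (cases "p = 2")
    case True
    have "\<delta>\<^sup>2 + \<delta> \<ge> 0" using d by simp
    then have "sqrt (\<delta>\<^sup>2 + \<delta>) \<ge> 0" by simp
    moreover have "s_p \<delta> p = \<delta> + sqrt (\<delta>\<^sup>2 + \<delta>)" using True by (simp add: s_p_def)
    ultimately show ?thesis using d by linarith
  next
    case False
    then have p2: "p > 2" using p by simp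
    have "4 * \<delta> > (p - 1)\<^sup>2"
    proof -
      consider "2 \<le> p \<and> p < 3 \<and> \<delta> \<ge> 1" | "p = 3 \<and> \<delta> > 1" | "p > 3 \<and> \<delta> > (p - 1)\<^sup>2 / 4"
        using P unfolding class_Pa_def by blast
      then show ?thesis
      proof cases
        case 1
        then have "(p - 1)\<^sup>2 < 2\<^sup>2" by (intro power_strict_mono) auto
        then show ?thesis using 1 by simp
      next
        case 2 then show ?thesis by (simp add: power2_eq_square)
      next
        case 3 then show ?thesis by simp
      qed
    qed
    then have "(p - 1) * (p - 1) < 4 * \<delta>" by (simp add: power2_eq_square)
    then have "(p - 1) / 2 < 2 * \<delta> / (p - 1)" using p2 by (simp add: field_simps)
    then show ?thesis using False by (simp add: s_p_def)
  qed
  have "p - 1 + \<delta> > 0" using p d by simp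
  then have "2 * s_p \<delta> p / (p - 1 + \<delta>) > 0" using sp by simp
  then show ?thesis by (simp add: S_pa_def)
qed

lemma ball_measure:
  assumes "r \<ge> 0"
  shows "measure lebesgue (ball (0::'a::euclidean_space) r) = unit_ball_vol (real DIM('a)) * r ^ DIM('a)"
  using content_ball[OF assms, of 0] by simp

lemma ball_emeasure_fin: "emeasure lebesgue (ball (0::'a::euclidean_space) r) < \<infinity>"
  using emeasure_lborel_ball_finite[of 0 r] by simp

lemma wbound:
  fixes w t S :: real
  assumes w: "w > 0" and t: "t > 0" and S: "S > 1"
  shows "w \<le> t powr (1 - S) * w powr S + t"
proof (cases "w \<ge> t")
  case True
  have "w = w powr S * w powr (1 - S)" using w by (simp add: powr_add[symmetric])
  also have "\<dots> \<le> w powr S * t powr (1 - S)"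
    using True t S by (intro mult_left_mono powr_mono2') auto
  finally show ?thesis using t by (simp add: mult.commute)
next
  case False
  have "t powr (1 - S) * w powr S \<ge> 0" by simp
  then show ?thesis using False by linarith
qed


lemma main_R:
  fixes w g u :: "'a::euclidean_space \<Rightarrow> real" and Gu :: "'a \<Rightarrow> 'a"
  assumes wl: "loc_integrable w" and gl: "loc_integrable g"
    and wpos: "AE x in lebesgue. w x > 0" and gM: "AE x in lebesgue. g x \<ge> 1 / M" and M: "M > 0"
    and Gu_cont: "continuous_on UNIV Gu" and Gu_der: "\<And>x. (u has_derivative (\<lambda>h. Gu x \<bullet> h)) (at x)"
    and ub: "\<And>x. 0 < u x \<and> u x \<le> 1" and u_cont: "continuous_on UNIV u"
    and weak: "weak_sol w g \<delta> \<gamma> p u" and d: "\<delta> > 0" and dg: "\<delta> < \<gamma>" and p: "p \<ge> 2"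
    and m2: "m \<ge> 2" and mp: "real m \<ge> p" and R1: "R \<ge> 1"
  shows "2 * (1 / M) * (3 / 4) ^ m * measure lebesgue (ball (0::'a) R)
         \<le> (2 * real m) powr p / R powr p * (LINT x|lebesgue. w x * indicator (ball 0 (2 * R)) x)"
proof -
  have R0: "R > 0" using R1 by simp
  define K where "K = (2 * real m) powr p / R powr p"
  have K0: "K \<ge> 0" unfolding K_def by simp
  define \<phi> where "\<phi> = (\<lambda>x. (u x + 1) * zeta R x ^ m)"
  define G\<phi> where "G\<phi> = (\<lambda>x. (u x + 1) *\<^sub>R Gpsi R m x + zeta R x ^ m *\<^sub>R Gu x)"
  have \<phi>der: "\<And>x. (\<phi> has_derivative (\<lambda>h. G\<phi> x \<bullet> h)) (at x)"
    unfolding \<phi>_def G\<phi>_def by (rule phi_deriv[OF m2 R0 Gu_der])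
  have G\<phi>cont: "continuous_on UNIV G\<phi>"
    unfolding G\<phi>_def
    by (intro continuous_on_add continuous_on_scaleR continuous_on_power continuous_on_const
          u_cont Gpsi_cont zeta_cont Gu_cont)
  have supp: "zeta R x = 0" if "x \<notin> cball 0 (2 * R)" for x
  proof -
    have "norm x \<ge> 2 * R" using that by (simp add: mem_cball_0)
    then show ?thesis by (rule zeta_zero[OF R0])
  qed
  have suppG: "Gpsi R m x = 0" if "x \<notin> cball 0 (2 * R)" for x
    using supp[OF that] m2 by (simp add: Gpsi_def power_0_left)
  have \<phi>C1c: "C1c \<phi>"
    unfolding C1c_def C1_def
  proof (intro conjI exI)
    show "continuous_on UNIV G\<phi>" by (rule G\<phi>cont)
    show "\<forall>x. (\<phi> has_derivative (\<lambda>h. G\<phi> x \<bullet> h)) (at x)" using \<phi>der by blast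
    show "compact (cball (0::'a) (2 * R))" by simp
    show "\<forall>x. x \<notin> cball 0 (2 * R) \<longrightarrow> \<phi> x = 0"
    proof (intro allI impI)
      fix x :: 'a assume "x \<notin> cball 0 (2 * R)"
      from supp[OF this] show "\<phi> x = 0" using m2 by (simp add: \<phi>_def power_0_left)
    qed
  qed
  have gradu: "\<And>x. grad u x = Gu x" by (rule grad_eq[OF Gu_der])
  have grad\<phi>: "\<And>x. grad \<phi> x = G\<phi> x" by (rule grad_eq[OF \<phi>der])
  have eq: "(LINT x|lebesgue. w x * npow (norm (Gu x)) (p - 2) * (Gu x \<bullet> G\<phi> x))
          = (LINT x|lebesgue. g x * fnl \<delta> \<gamma> (u x) * \<phi> x)"
  proof -
    have "\<forall>\<phi>. C1c \<phi> \<longrightarrow> (LINT x|lebesgue. w x * npow (norm (Gu x)) (p - 2) * (Gu x \<bullet> grad \<phi> x))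
        = (LINT x|lebesgue. g x * fnl \<delta> \<gamma> (u x) * \<phi> x)"
      using weak unfolding weak_sol_def gradu by (rule conjunct2)
    then have "(LINT x|lebesgue. w x * npow (norm (Gu x)) (p - 2) * (Gu x \<bullet> grad \<phi> x))
        = (LINT x|lebesgue. g x * fnl \<delta> \<gamma> (u x) * \<phi> x)" using \<phi>C1c by blast
    then show ?thesis by (simp only: grad\<phi>)
  qed
  have i1: "integrable lebesgue (\<lambda>x. w x * npow (norm (Gu x)) (p - 2) * (Gu x \<bullet> G\<phi> x))"
  proof -
    have "integrable lebesgue (\<lambda>x. w x * (npow (norm (Gu x)) (p - 2) * (Gu x \<bullet> G\<phi> x)))"
    proof (rule loc_int_mult[OF wl _ compact_cball[of 0 "2 * R"]])
      show "continuous_on UNIV (\<lambda>x. npow (norm (Gu x)) (p - 2) * (Gu x \<bullet> G\<phi> x))"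
        by (intro continuous_on_mult continuous_on_inner npow_cont[OF Gu_cont p] Gu_cont G\<phi>cont)
      show "npow (norm (Gu x)) (p - 2) * (Gu x \<bullet> G\<phi> x) = 0" if "x \<notin> cball 0 (2 * R)" for x
        using supp[OF that] suppG[OF that] m2 by (simp add: G\<phi>_def power_0_left)
    qed
    then show ?thesis by (simp add: mult.assoc)
  qed
  have fcont: "continuous_on UNIV (\<lambda>x. fnl \<delta> \<gamma> (u x))"
  proof -
    have un: "u x \<ge> 0 \<and> (u x = 0 \<longrightarrow> e > 0)" for x and e :: real using ub[of x] by auto
    have c1: "continuous_on UNIV (\<lambda>x. u x powr (- \<delta>))"
      by (rule continuous_on_powr'[OF u_cont continuous_on_const]) (use un in blast)
    have c2: "continuous_on UNIV (\<lambda>x. u x powr (- \<gamma>))"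
      by (rule continuous_on_powr'[OF u_cont continuous_on_const]) (use un in blast)
    show ?thesis unfolding fnl_def by (intro continuous_on_diff continuous_on_minus c1 c2)
  qed
  have psicont: "continuous_on UNIV (\<lambda>x. zeta R x ^ m)"
    by (intro continuous_on_power zeta_cont)
  have i2: "integrable lebesgue (\<lambda>x. g x * fnl \<delta> \<gamma> (u x) * \<phi> x)"
  proof -
    have "integrable lebesgue (\<lambda>x. g x * (fnl \<delta> \<gamma> (u x) * \<phi> x))"
    proof (rule loc_int_mult[OF gl _ compact_cball[of 0 "2 * R"]])
      show "continuous_on UNIV (\<lambda>x. fnl \<delta> \<gamma> (u x) * \<phi> x)"
        unfolding \<phi>_def
        by (intro continuous_on_mult continuous_on_add fcont u_cont continuous_on_const psicont)
      show "fnl \<delta> \<gamma> (u x) * \<phi> x = 0" if "x \<notin> cball 0 (2 * R)" for x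
        using supp[OF that] m2 by (simp add: \<phi>_def power_0_left)
    qed
    then show ?thesis by (simp add: mult.assoc)
  qed
  have i3: "integrable lebesgue (\<lambda>x. g x * zeta R x ^ m)"
  proof (rule loc_int_mult[OF gl psicont compact_cball[of 0 "2 * R"]])
    show "zeta R x ^ m = 0" if "x \<notin> cball 0 (2 * R)" for x
      using supp[OF that] m2 by (simp add: power_0_left)
  qed
  have i4: "integrable lebesgue (\<lambda>x. w x * indicator (ball 0 (2 * R)) x)"
  proof -
    have "set_integrable lebesgue (cball 0 (2 * R)) w" using wl unfolding loc_integrable_def by simp
    then have "set_integrable lebesgue (ball 0 (2 * R)) w"
      by (rule set_integrable_subset) auto
    then show ?thesis unfolding set_integrable_def by (simp add: mult.commute)
  qed
  have i5: "integrable lebesgue (indicator (ball (0::'a) R) :: 'a \<Rightarrow> real)"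
    by (rule integrable_real_indicator[OF _ ball_emeasure_fin]) simp
  have a1: "AE x in lebesgue. - K * (w x * indicator (ball 0 (2 * R)) x)
      \<le> w x * npow (norm (Gu x)) (p - 2) * (Gu x \<bullet> G\<phi> x)"
    using wpos
  proof (rule AE_mp, intro AE_I2 impI)
    fix x assume wx: "w x > 0"
    define a where "a = norm (Gu x)"
    define b where "b = norm (Gpsi R m x)"
    define z where "z = zeta R x"
    define q where "q = Gu x \<bullet> G\<phi> x"
    have q_eq: "q = (u x + 1) * (Gu x \<bullet> Gpsi R m x) + z ^ m * a\<^sup>2"
      unfolding q_def G\<phi>_def a_def z_def by (simp add: inner_add_right dot_square_norm)
    have cs: "\<bar>Gu x \<bullet> Gpsi R m x\<bar> \<le> a * b" unfolding a_def b_def by (rule Cauchy_Schwarz_ineq2)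
    have u1: "0 < u x + 1" "u x + 1 \<le> 2" using ub[of x] by auto
    have "(u x + 1) * (Gu x \<bullet> Gpsi R m x) \<ge> - (2 * (a * b))"
    proof -
      have "- ((u x + 1) * (a * b)) \<le> (u x + 1) * (Gu x \<bullet> Gpsi R m x)"
        using cs u1 by (smt (verit) abs_le_iff mult_left_mono mult_minus_right)
      moreover have "(u x + 1) * (a * b) \<le> 2 * (a * b)"
        using u1 unfolding a_def b_def by (intro mult_right_mono) auto
      ultimately show ?thesis by linarith
    qed
    then have q: "q \<ge> z ^ m * a\<^sup>2 - 2 * a * b" using q_eq by (simp add: mult.assoc)
    have k: "npow a (p - 2) * q \<ge> (if z > 0 then - ((2 * real m) powr p / R powr p) else 0)"
    proof (rule key_ineq[OF _ _ _ _ R0 p mp _ q])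
      show "0 \<le> a" unfolding a_def by simp
      show "0 \<le> b" unfolding b_def by simp
      show "0 \<le> z" unfolding z_def by (rule zeta_nonneg)
      show "z \<le> 1" unfolding z_def by (rule zeta_le1[OF R0])
      show "b \<le> real m / R * z ^ (m - 1)" unfolding b_def z_def by (rule Gpsi_bound[OF R0 m2])
    qed
    show "- K * (w x * indicator (ball 0 (2 * R)) x) \<le> w x * npow (norm (Gu x)) (p - 2) * (Gu x \<bullet> G\<phi> x)"
    proof (cases "z > 0")
      case True
      have "norm x < 2 * R" using zeta_pos_norm[OF R0] True unfolding z_def by blast
      then have ind: "indicator (ball (0::'a) (2 * R)) x = (1::real)" by (simp add: mem_ball_0)
      have "w x * (- K) \<le> w x * (npow a (p - 2) * q)"
        using k True wx unfolding K_def by (intro mult_left_mono) auto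
      then show ?thesis using ind unfolding a_def q_def by (simp add: ac_simps)
    next
      case False
      have "w x * 0 \<le> w x * (npow a (p - 2) * q)" using k False wx by (intro mult_left_mono) auto
      moreover have "- K * (w x * indicator (ball 0 (2 * R)) x) \<le> 0"
        using K0 wx by (simp add: mult_nonneg_nonneg)
      ultimately show ?thesis unfolding a_def q_def by (simp add: mult.assoc)
    qed
  qed
  have fle: "fnl \<delta> \<gamma> (u x) \<le> -2" for x
  proof -
    have u: "0 < u x" "u x \<le> 1" using ub[of x] by auto
    have "u x powr 0 \<le> u x powr (- \<delta>)" using u d by (intro powr_mono') auto
    moreover have "u x powr 0 \<le> u x powr (- \<gamma>)" using u d dg by (intro powr_mono') auto
    ultimately show ?thesis using u by (simp add: fnl_def)
  qed
  have a2: "AE x in lebesgue. g x * fnl \<delta> \<gamma> (u x) * \<phi> x \<le> -2 * (g x * zeta R x ^ m)"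
    using gM
  proof (rule AE_mp, intro AE_I2 impI)
    fix x assume gx: "g x \<ge> 1 / M"
    then have gx0: "g x > 0" using M by (smt (verit) divide_pos_pos)
    have z0: "zeta R x ^ m \<ge> 0" using zeta_nonneg[of R x] by simp
    have ph: "\<phi> x \<ge> zeta R x ^ m"
    proof -
      have "\<phi> x - zeta R x ^ m = u x * zeta R x ^ m" unfolding \<phi>_def by (simp add: algebra_simps)
      also have "\<dots> \<ge> 0" using ub[of x] z0 by simp
      finally show ?thesis by simp
    qed
    have "fnl \<delta> \<gamma> (u x) * \<phi> x \<le> -2 * \<phi> x" using fle[of x] ph z0 by (intro mult_right_mono) auto
    also have "\<dots> \<le> -2 * zeta R x ^ m" using ph by simp
    finally have "g x * (fnl \<delta> \<gamma> (u x) * \<phi> x) \<le> g x * (-2 * zeta R x ^ m)"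
      using gx0 by (intro mult_left_mono) auto
    then show "g x * fnl \<delta> \<gamma> (u x) * \<phi> x \<le> -2 * (g x * zeta R x ^ m)" by (simp add: mult.assoc mult.left_commute)
  qed
  have a3: "AE x in lebesgue. (1 / M) * (3 / 4) ^ m * indicator (ball (0::'a) R) x \<le> g x * zeta R x ^ m"
    using gM
  proof (rule AE_mp, intro AE_I2 impI)
    fix x assume gx: "g x \<ge> 1 / M"
    then have gx0: "g x > 0" using M by (smt (verit) divide_pos_pos)
    have z0: "zeta R x ^ m \<ge> 0" using zeta_nonneg[of R x] by simp
    show "(1 / M) * (3 / 4) ^ m * indicator (ball (0::'a) R) x \<le> g x * zeta R x ^ m"
    proof (cases "x \<in> ball 0 R")
      case True
      then have "zeta R x \<ge> 3 / 4" using zeta_ball[OF R0] by (simp add: mem_ball_0)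
      then have "(3 / 4) ^ m \<le> zeta R x ^ m" by (intro power_mono) auto
      then have "(1 / M) * (3 / 4) ^ m \<le> g x * zeta R x ^ m" using gx gx0 M by (intro mult_mono) auto
      then show ?thesis using True by simp
    next
      case False
      then show ?thesis using gx0 z0 by simp
    qed
  qed
  have c1: "- K * (LINT x|lebesgue. w x * indicator (ball 0 (2 * R)) x)
      \<le> (LINT x|lebesgue. w x * npow (norm (Gu x)) (p - 2) * (Gu x \<bullet> G\<phi> x))"
  proof -
    have "(LINT x|lebesgue. - K * (w x * indicator (ball 0 (2 * R)) x))
      \<le> (LINT x|lebesgue. w x * npow (norm (Gu x)) (p - 2) * (Gu x \<bullet> G\<phi> x))"
      by (rule integral_mono_AE[OF integrable_mult_right[OF i4] i1 a1])
    then show ?thesis by simp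
  qed
  have c2: "(LINT x|lebesgue. g x * fnl \<delta> \<gamma> (u x) * \<phi> x) \<le> -2 * (LINT x|lebesgue. g x * zeta R x ^ m)"
  proof -
    have "(LINT x|lebesgue. g x * fnl \<delta> \<gamma> (u x) * \<phi> x) \<le> (LINT x|lebesgue. -2 * (g x * zeta R x ^ m))"
      by (rule integral_mono_AE[OF i2 integrable_mult_right[OF i3] a2])
    then show ?thesis by simp
  qed
  have c3: "(1 / M) * (3 / 4) ^ m * measure lebesgue (ball (0::'a) R) \<le> (LINT x|lebesgue. g x * zeta R x ^ m)"
  proof -
    have "(LINT x|lebesgue. (1 / M) * (3 / 4) ^ m * indicator (ball (0::'a) R) x) \<le> (LINT x|lebesgue. g x * zeta R x ^ m)"
      by (rule integral_mono_AE[OF integrable_mult_right[OF i5] i3 a3])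
    then show ?thesis by simp
  qed
  have "- K * (LINT x|lebesgue. w x * indicator (ball 0 (2 * R)) x)
      \<le> - 2 * ((1 / M) * (3 / 4) ^ m * measure lebesgue (ball (0::'a) R))"
    using c1 c2 c3 eq by linarith
  then show ?thesis unfolding K_def by simp
qed


lemma bound_I:
  fixes w :: "'a::euclidean_space \<Rightarrow> real"
  assumes wl: "loc_integrable w" and wpos: "AE x in lebesgue. w x > 0" and t: "t > 0" and S: "S > 1"
    and hyp: "set_nn_integral lebesgue (ball 0 r) (\<lambda>x. ennreal (w x powr S)) \<le> ennreal Q" and Q: "Q \<ge> 0"
  shows "(LINT x|lebesgue. w x * indicator (ball 0 r) x) \<le> t powr (1 - S) * Q + t * measure lebesgue (ball (0::'a) r)"
proof -
  note wm[measurable] = loc_int_meas[OF wl]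
  define B where "B = ball (0::'a) r"
  have Bm[measurable]: "B \<in> sets lebesgue" unfolding B_def by simp
  have meas: "(\<lambda>x. w x * indicator B x) \<in> borel_measurable lebesgue" by measurable
  have m1: "(\<lambda>x. ennreal (t powr (1 - S)) * (ennreal (w x powr S) * indicator B x)) \<in> borel_measurable lebesgue"
    by measurable
  have m2: "(\<lambda>x. ennreal t * indicator B x) \<in> borel_measurable lebesgue" by measurable
  have m3: "(\<lambda>x. ennreal (w x powr S) * indicator B x) \<in> borel_measurable lebesgue" by measurable
  have fin: "emeasure lebesgue B < \<infinity>" unfolding B_def by (rule ball_emeasure_fin)
  have "(LINT x|lebesgue. w x * indicator B x) = enn2real (\<integral>\<^sup>+ x. ennreal (w x * indicator B x) \<partial>lebesgue)"
  proof (rule integral_eq_nn_integral[OF meas])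
    show "AE x in lebesgue. 0 \<le> w x * indicator B x" using wpos by (rule AE_mp) (auto intro!: AE_I2)
  qed
  also have "\<dots> \<le> enn2real (ennreal (t powr (1 - S) * Q + t * measure lebesgue B))"
  proof (rule enn2real_mono)
    have pt: "AE x in lebesgue. ennreal (w x * indicator B x)
        \<le> ennreal (t powr (1 - S)) * (ennreal (w x powr S) * indicator B x) + ennreal t * indicator B x"
      using wpos
    proof (rule AE_mp, intro AE_I2 impI)
      fix x assume wx: "w x > 0"
      show "ennreal (w x * indicator B x)
        \<le> ennreal (t powr (1 - S)) * (ennreal (w x powr S) * indicator B x) + ennreal t * indicator B x"
      proof (cases "x \<in> B")
        case True
        have "w x \<le> t powr (1 - S) * w x powr S + t" by (rule wbound[OF wx t S])
        then have "ennreal (w x) \<le> ennreal (t powr (1 - S) * w x powr S + t)" by (rule ennreal_leI)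
        also have "\<dots> = ennreal (t powr (1 - S)) * ennreal (w x powr S) + ennreal t"
          using t by (simp add: ennreal_plus ennreal_mult)
        finally show ?thesis using True by simp
      next
        case False then show ?thesis by simp
      qed
    qed
    have "(\<integral>\<^sup>+ x. ennreal (w x * indicator B x) \<partial>lebesgue)
        \<le> (\<integral>\<^sup>+ x. ennreal (t powr (1 - S)) * (ennreal (w x powr S) * indicator B x) + ennreal t * indicator B x \<partial>lebesgue)"
      by (rule nn_integral_mono_AE[OF pt])
    also have "\<dots> = ennreal (t powr (1 - S)) * (\<integral>\<^sup>+ x. ennreal (w x powr S) * indicator B x \<partial>lebesgue)
        + ennreal t * emeasure lebesgue B"
      by (simp add: nn_integral_add[OF m1 m2] nn_integral_cmult[OF m3] nn_integral_cmult)
    also have "\<dots> \<le> ennreal (t powr (1 - S)) * ennreal Q + ennreal t * ennreal (measure lebesgue B)"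
      using hyp fin unfolding B_def by (intro add_mono mult_left_mono) (auto simp: emeasure_eq_ennreal_measure)
    also have "\<dots> = ennreal (t powr (1 - S) * Q + t * measure lebesgue B)"
      using t Q by (simp add: ennreal_plus ennreal_mult)
    finally show "(\<integral>\<^sup>+ x. ennreal (w x * indicator B x) \<partial>lebesgue) \<le> ennreal (t powr (1 - S) * Q + t * measure lebesgue B)" .
    show "ennreal (t powr (1 - S) * Q + t * measure lebesgue B) < top" by simp
  qed
  also have "\<dots> = t powr (1 - S) * Q + t * measure lebesgue B"
  proof (rule enn2real_ennreal)
    have "t * measure lebesgue B \<ge> 0" using t by simp
    moreover have "t powr (1 - S) * Q \<ge> 0" using Q by simp
    ultimately show "0 \<le> t powr (1 - S) * Q + t * measure lebesgue B" by linarith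
  qed
  finally show ?thesis unfolding B_def .
qed


lemma field_alg:
  fixes K P X C L A V T Q :: real
  assumes "P \<noteq> 0" "Q \<noteq> 0"
  shows "K / P * (X * (C * L) + A * (V * (T * Q))) = Q * (K * C * (X * L / P / Q) + K * V * T * (A / P))"
  using assms by (simp add: field_simps)

lemma alg:
  fixes R K C V S \<alpha> lam p :: real
  assumes R: "R > 0"
  shows "K / R powr p * ((R powr \<alpha>) powr (1 - S) * (C * R powr lam) + R powr \<alpha> * (V * (2 * R) ^ N))
       = R ^ N * (K * C * R powr (\<alpha> * (1 - S) + lam - p - real N) + K * V * 2 ^ N * R powr (\<alpha> - p))"
proof -
  have e1: "R powr (\<alpha> * (1 - S) + lam - p - real N) = R powr (\<alpha> * (1 - S)) * R powr lam / R powr p / R powr (real N)"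
    by (simp only: powr_add powr_diff)
  have e2: "R powr (\<alpha> - p) = R powr \<alpha> / R powr p" by (rule powr_diff)
  have e3: "(R powr \<alpha>) powr (1 - S) = R powr (\<alpha> * (1 - S))" by (rule powr_powr)
  have e4: "R ^ N = R powr (real N)" using R by (simp add: powr_realpow)
  have e5: "(2 * R) ^ N = 2 ^ N * R ^ N" by (simp add: power_mult_distrib)
  have P: "R powr p \<noteq> 0" using R by simp
  have Q: "R powr (real N) \<noteq> 0" using R by simp
  show ?thesis unfolding e1 e2 e3 e5 unfolding e4
    using field_alg[OF P Q, of K "R powr (\<alpha> * (1 - S))" C "R powr lam" "R powr \<alpha>" V "2 ^ N"]
    by (simp add: mult.assoc)
qed

theorem theorem3p2:
  fixes w g :: "'a::euclidean_space \<Rightarrow> real" and p \<delta> \<gamma> lam C :: real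
  assumes "p \<ge> 2"
    and "loc_integrable w" and "loc_integrable g"
    and "AE x in lebesgue. w x > 0" and "AE x in lebesgue. g x > 0"
    and "\<exists>M. AE x in lebesgue. \<bar>1 / g x\<bar> \<le> M"
    and "0 < \<delta>" and "\<delta> < \<gamma>" and "class_Pa \<delta> p"
    and "lam > 0" and "C > 0" and "lam < p * S_pa \<delta> p"
    and "\<forall>R\<ge>1. set_nn_integral lebesgue (ball 0 (2 * R)) (\<lambda>x. ennreal (w x powr S_pa \<delta> p))
                 \<le> ennreal (C * R powr lam)"
  shows "\<not> (\<exists>u. C1 u \<and> (\<forall>x. 0 < u x \<and> u x \<le> 1) \<and> weak_sol w g \<delta> \<gamma> p u \<and> stable_sol w g \<delta> \<gamma> p u)"
proof
  note p = assms(1) and wl = assms(2) and gl = assms(3) and wpos = assms(4) and gpos = assms(5)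
    and d = assms(7) and dg = assms(8) and P = assms(9) and lam0 = assms(10) and C0 = assms(11)
    and lamS = assms(12) and hyp = assms(13)
  assume "\<exists>u. C1 u \<and> (\<forall>x. 0 < u x \<and> u x \<le> 1) \<and> weak_sol w g \<delta> \<gamma> p u \<and> stable_sol w g \<delta> \<gamma> p u"
  then obtain u where uC1: "C1 u" and ub: "\<And>x. 0 < u x \<and> u x \<le> 1" and weak: "weak_sol w g \<delta> \<gamma> p u"
    by blast
  from uC1 obtain Gu where Gc: "continuous_on UNIV Gu" and Gd: "\<And>x. (u has_derivative (\<lambda>h. Gu x \<bullet> h)) (at x)"
    unfolding C1_def by blast
  have ucont: "continuous_on UNIV u"
    by (intro continuous_at_imp_continuous_on ballI has_derivative_continuous[OF Gd])
  define S where "S = S_pa \<delta> p"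
  have S1: "S > 1" unfolding S_def by (rule S_gt1[OF P d p])
  define m where "m = nat \<lceil>p\<rceil>"
  have mp: "real m \<ge> p" unfolding m_def using p by linarith
  have m2: "m \<ge> 2" using mp p by linarith
  obtain M0 where M0: "AE x in lebesgue. \<bar>1 / g x\<bar> \<le> M0" using assms(6) by blast
  define M where "M = max M0 1"
  have M: "M > 0" unfolding M_def by simp
  have gM: "AE x in lebesgue. g x \<ge> 1 / M"
    using M0 gpos
  proof (rule AE_mp[OF AE_conjI], intro AE_I2 impI)
    fix x assume h: "\<bar>1 / g x\<bar> \<le> M0 \<and> 0 < g x"
    then have "1 / g x \<le> M" unfolding M_def by auto
    then have "1 \<le> M * g x" using h by (simp add: divide_le_eq mult.commute)
    then show "g x \<ge> 1 / M" using M by (simp add: divide_le_eq mult.commute)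
  qed
  define N where "N = DIM('a)"
  define V where "V = unit_ball_vol (real N)"
  have V0: "V > 0" unfolding V_def by simp
  define K where "K = (2 * real m) powr p"
  have K0: "K > 0" unfolding K_def using m2 by simp
  define c1 where "c1 = 2 * (1 / M) * (3 / 4) ^ m"
  have c10: "c1 > 0" unfolding c1_def using M by simp
  define \<epsilon> where "\<epsilon> = (p * S - lam) / (2 * (S - 1))"
  have eps0: "\<epsilon> > 0" unfolding \<epsilon>_def using S1 lamS unfolding S_def by simp
  have epsS: "\<epsilon> * (S - 1) = (p * S - lam) / 2" unfolding \<epsilon>_def using S1 by (simp add: field_simps)
  define \<alpha> where "\<alpha> = p - \<epsilon>"
  define e1 where "e1 = \<alpha> * (1 - S) + lam - p - real N"
  define e2 where "e2 = \<alpha> - p"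
  have e1n: "e1 < 0"
  proof -
    have "\<alpha> * (1 - S) = p - p * S + \<epsilon> * (S - 1)" unfolding \<alpha>_def by (simp add: algebra_simps)
    then have h1: "\<alpha> * (1 - S) = p - p * S + (p * S - lam) / 2" using epsS by simp
    have gen: "\<And>a b. a = p - b + (b - lam) / 2 \<Longrightarrow> a + lam - p - real N = (lam - b) / 2 - real N" by (simp add: field_simps)
    have "e1 = (lam - p * S) / 2 - real N" unfolding e1_def by (rule gen[OF h1])
    then show ?thesis using lamS unfolding S_def by simp
  qed
  have e2n: "e2 < 0" unfolding e2_def \<alpha>_def using eps0 by simp
  define F where "F = (\<lambda>R. K * C * R powr e1 + K * V * 2 ^ N * R powr e2)"
  have ineq: "c1 * V \<le> F R" if R1: "R \<ge> 1" for R
  proof -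
    have R0: "R > 0" using R1 by simp
    define I where "I = (LINT x|lebesgue. w x * indicator (ball (0::'a) (2 * R)) x)"
    have A: "c1 * (V * R ^ N) \<le> K / R powr p * I"
      using main_R[OF wl gl wpos gM M Gc Gd ub ucont weak d dg p m2 mp R1]
      unfolding c1_def K_def I_def V_def N_def using ball_measure[where 'a='a, of R] R0 by simp
    have B: "I \<le> (R powr \<alpha>) powr (1 - S) * (C * R powr lam) + R powr \<alpha> * (V * (2 * R) ^ N)"
    proof -
      have h: "set_nn_integral lebesgue (ball 0 (2 * R)) (\<lambda>x. ennreal (w x powr S)) \<le> ennreal (C * R powr lam)"
        using hyp R1 unfolding S_def by blast
      have "I \<le> (R powr \<alpha>) powr (1 - S) * (C * R powr lam) + R powr \<alpha> * measure lebesgue (ball (0::'a) (2 * R))"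
        unfolding I_def by (rule bound_I[OF wl wpos _ S1 h]) (use R0 C0 in auto)
      then show ?thesis using ball_measure[where 'a='a, of "2 * R"] R0 unfolding V_def N_def by simp
    qed
    have "c1 * V * R ^ N \<le> K / R powr p * ((R powr \<alpha>) powr (1 - S) * (C * R powr lam) + R powr \<alpha> * (V * (2 * R) ^ N))"
    proof -
      have Kp: "K / R powr p \<ge> 0" using K0 by simp
      have "K / R powr p * I \<le> K / R powr p * ((R powr \<alpha>) powr (1 - S) * (C * R powr lam) + R powr \<alpha> * (V * (2 * R) ^ N))"
        by (rule mult_left_mono[OF B Kp])
      moreover have "c1 * V * R ^ N = c1 * (V * R ^ N)" by (simp only: mult.assoc)
      ultimately show ?thesis using A by linarith
    qed
    also have "\<dots> = R ^ N * F R" unfolding F_def e1_def e2_def by (rule alg[OF R0])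
    finally have "R ^ N * (c1 * V) \<le> R ^ N * F R" by (simp add: mult.commute)
    moreover have "R ^ N > 0" using R0 by simp
    ultimately show ?thesis by simp
  qed
  have lim: "(F \<longlongrightarrow> 0) at_top"
  proof -
    have l1: "((\<lambda>R::real. R powr e1) \<longlongrightarrow> 0) at_top" by (rule tendsto_neg_powr[OF e1n filterlim_ident])
    have l2: "((\<lambda>R::real. R powr e2) \<longlongrightarrow> 0) at_top" by (rule tendsto_neg_powr[OF e2n filterlim_ident])
    have "((\<lambda>R. K * C * R powr e1 + K * V * 2 ^ N * R powr e2) \<longlongrightarrow> K * C * 0 + K * V * 2 ^ N * 0) at_top"
      by (intro tendsto_intros l1 l2)
    then show ?thesis unfolding F_def by simp
  qed
  have cv: "0 < c1 * V" using c10 V0 by simp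
  have "eventually (\<lambda>R. F R < c1 * V) at_top"
    by (rule order_tendstoD(2)[OF lim cv])
  moreover have "eventually (\<lambda>R::real. R \<ge> 1) at_top" by (rule eventually_ge_at_top)
  ultimately have "eventually (\<lambda>R. F R < c1 * V \<and> R \<ge> 1) at_top" by (rule eventually_conj)
  then obtain R1 where "\<forall>R\<ge>R1. F R < c1 * V \<and> R \<ge> 1" unfolding eventually_at_top_linorder by blast
  then have "F R1 < c1 * V" "R1 \<ge> 1" by auto
  then show False using ineq[of R1] by linarith
qed

end
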